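(* Let $x\in\mathrm{GF}(2^7)$ be such that the eight elements $0,1,x,x^3,x^7,x^{15},x^{31},x^{63}$ are pairwise distinct. Then the set $\{0,1,x,x^3,x^7,x^{15},x^{31},x^{63}\}$ is a subgroup of the additive group of $\mathrm{GF}(2^7)$ if and only if either $1+x=x^7$ or $1+x^3=x^7$. *)

theory Defs
  imports Main
begin

definition additive_subgroup :: "'a::ab_group_add set \<Rightarrow> bool" where
  "additive_subgroup S \<longleftrightarrow> 0 \<in> S \<and> (\<forall>a\<in>S. \<forall>b\<in>S. a + b \<in> S) \<and> (\<forall>a\<in>S. - a \<in> S)"

end

theory Submission
  imports Defs
begin

lemma char2_aux:
  assumes "card (UNIV :: 'a::{field,finite} set) = 2 ^ 7"
  shows "(1::'a) + 1 = 0"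
proof -
  have "(\<Sum>y\<in>UNIV. y + (1::'a)) = (\<Sum>y\<in>UNIV. y)"
    by (rule sum.reindex_bij_witness[where i="\<lambda>b. b - 1" and j="\<lambda>a. a + 1"]) auto
  hence "of_nat (card (UNIV::'a set)) * (1::'a) = 0"
    by (simp add: sum.distrib)
  hence "(2::'a) ^ 7 = 0" using assms by simp
  hence "(2::'a) = 0" by (rule power_eq_0_iff[THEN iffD1, THEN conjunct1])
  thus ?thesis by simp
qed

lemma pow127_aux:
  fixes x :: "'a::{field,finite}"
  assumes "card (UNIV :: 'a set) = 2 ^ 7" and "x \<noteq> 0"
  shows "x ^ 127 = 1"
proof -
  let ?U = "UNIV - {0::'a}"
  have cU: "card ?U = 127" using assms(1) by (simp add: card_Diff_singleton)
  have "prod (\<lambda>y. x * y) ?U = prod id ?U"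
    by (rule prod.reindex_bij_witness[where i="\<lambda>b. b / x" and j="\<lambda>a. x * a"]) (use assms(2) in auto)
  moreover have "prod (\<lambda>y. x * y) ?U = x ^ card ?U * prod id ?U" by (simp add: prod.distrib)
  moreover have "prod id ?U \<noteq> 0" by simp
  ultimately show ?thesis using cU by simp
qed

lemma aa_aux:
  fixes a :: "'a::field"
  assumes "(1::'a) + 1 = 0"
  shows "a + a = 0"
proof -
  have "a + a = a * (1 + 1)" by (simp add: distrib_left)
  thus ?thesis using assms by simp
qed

lemma tri:
  fixes a b c :: "'a::field"
  assumes c2: "(1::'a) + 1 = 0" and e: "a + b = c"
  shows "b + c = a" "a + c = b" "b + a = c" "c + a = b" "c + b = a" "a + b = c"
proof -
  have aa: "\<And>z::'a. z + z = 0" using aa_aux[OF c2] .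
  have 1: "a + c = b" using e[symmetric] aa[of a] by (simp add: add.assoc[symmetric])
  have 2: "b + c = a" using e[symmetric] aa[of b] by (simp add: add.commute add.left_commute)
  show "b + c = a" "a + c = b" "b + a = c" "c + a = b" "c + b = a" "a + b = c"
    using 1 2 e by (simp_all add: add.commute)
qed

lemma step:
  fixes a b c x :: "'a::field"
  assumes c2: "(1::'a) + 1 = 0" and e: "a + b = c"
    and "x * a ^ 2 = a'" "x * b ^ 2 = b'" "x * c ^ 2 = c'"
  shows "a' + b' = c'"
proof -
  have two: "(2::'a) = 0" using c2 by simp
  have "x * c ^ 2 = x * (a + b) ^ 2" using e by simp
  also have "\<dots> = x * a ^ 2 + x * b ^ 2" by (simp add: power2_sum two distrib_left)
  finally show ?thesis using assms by simp
qed

theorem lemma6: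
  fixes x :: "'a::{field, finite}"
  assumes "card (UNIV :: 'a set) = 2 ^ 7"
    and "distinct [0, 1, x, x ^ 3, x ^ 7, x ^ 15, x ^ 31, x ^ 63]"
  shows "additive_subgroup {0, 1, x, x ^ 3, x ^ 7, x ^ 15, x ^ 31, x ^ 63}
         \<longleftrightarrow> (1 + x = x ^ 7 \<or> 1 + x ^ 3 = x ^ 7)"
proof -
  have c2: "(1::'a) + 1 = 0" using char2_aux[OF assms(1)] .
  have aa: "\<And>z::'a. z + z = 0" using aa_aux[OF c2] .
  have neg: "\<And>z::'a. - z = z" by (rule minus_unique[OF aa])
  have x0: "x \<noteq> 0" using assms(2) by simp
  have p127: "x ^ 127 = 1" using pow127_aux[OF assms(1) x0] .
  have fp: "\<And>k. x * (x ^ k) ^ 2 = x ^ (Suc (k * 2))" by (simp add: power_mult)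
  have f0: "x * 1 ^ 2 = x" by simp
  have f1: "x * x ^ 2 = x ^ 3" using fp[of 1] by simp
  have f3: "x * (x ^ 3) ^ 2 = x ^ 7" using fp[of 3] by simp
  have f7: "x * (x ^ 7) ^ 2 = x ^ 15" using fp[of 7] by simp
  have f15: "x * (x ^ 15) ^ 2 = x ^ 31" using fp[of 15] by simp
  have f31: "x * (x ^ 31) ^ 2 = x ^ 63" using fp[of 31] by simp
  have f63: "x * (x ^ 63) ^ 2 = 1" using fp[of 63] p127 by simp
  note fs = f0 f1 f3 f7 f15 f31 f63
  have d: "x \<noteq> 1" "x ^ 3 \<noteq> 1" "x ^ 7 \<noteq> 1" "x ^ 15 \<noteq> 1" "x ^ 31 \<noteq> 1" "x ^ 63 \<noteq> 1"
    "x ^ 3 \<noteq> x" "x ^ 7 \<noteq> x" "x ^ 15 \<noteq> x" "x ^ 31 \<noteq> x" "x ^ 63 \<noteq> x"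
    "x ^ 7 \<noteq> x ^ 3" "x ^ 15 \<noteq> x ^ 3" "x ^ 31 \<noteq> x ^ 3" "x ^ 63 \<noteq> x ^ 3"
    using assms(2) by (auto simp del: power_eq_0_iff)
  show ?thesis
  proof
    assume sub: "additive_subgroup {0, 1, x, x ^ 3, x ^ 7, x ^ 15, x ^ 31, x ^ 63}"
    hence "1 + x \<in> {0, 1, x, x ^ 3, x ^ 7, x ^ 15, x ^ 31, x ^ 63}"
      unfolding additive_subgroup_def by simp
    hence "1 + x = 0 \<or> 1 + x = 1 \<or> 1 + x = x \<or> 1 + x = x ^ 3 \<or> 1 + x = x ^ 7
       \<or> 1 + x = x ^ 15 \<or> 1 + x = x ^ 31 \<or> 1 + x = x ^ 63" by simp
    thus "1 + x = x ^ 7 \<or> 1 + x ^ 3 = x ^ 7"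
    proof (elim disjE)
      assume e: "1 + x = 0"
      have "x = 1" using tri(1)[OF c2 e] by simp
      thus ?thesis using d by simp
    next
      assume e: "1 + x = 1" thus ?thesis using x0 by simp
    next
      assume e: "1 + x = x" thus ?thesis using c2 by (metis add_cancel_left_left one_neq_zero)
    next
      assume e: "1 + x = x ^ 3"
      have e2: "x + x ^ 3 = x ^ 7" by (rule step[OF c2 e f0 f1 f3])
      have "1 = x ^ 7" using tri(1)[OF c2 e] e2 by simp
      thus ?thesis using d by simp
    next
      assume e: "1 + x = x ^ 7" thus ?thesis by simp
    next
      assume e: "1 + x = x ^ 15"
      have e1: "x + x ^ 3 = x ^ 31" by (rule step[OF c2 e f0 f1 f15])
      have e2: "x ^ 3 + x ^ 7 = x ^ 63" by (rule step[OF c2 e1 f1 f3 f31])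
      have e3: "x ^ 7 + x ^ 15 = 1" by (rule step[OF c2 e2 f3 f7 f63])
      have "x ^ 7 = x" using tri(5)[OF c2 e3] tri(2)[OF c2 e] by simp
      thus ?thesis using d by simp
    next
      assume e: "1 + x = x ^ 31"
      have e1: "x + x ^ 3 = x ^ 63" by (rule step[OF c2 e f0 f1 f31])
      have e2: "x ^ 3 + x ^ 7 = 1" by (rule step[OF c2 e1 f1 f3 f63])
      thus ?thesis using tri(4)[OF c2 e2] by simp
    next
      assume e: "1 + x = x ^ 63"
      have e1: "x + x ^ 3 = 1" by (rule step[OF c2 e f0 f1 f63])
      have e2: "x ^ 3 + x ^ 7 = x" by (rule step[OF c2 e1 f1 f3 f0])
      have e3: "x ^ 7 + x ^ 15 = x ^ 3" by (rule step[OF c2 e2 f3 f7 f1])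
      have e4: "x ^ 15 + x ^ 31 = x ^ 7" by (rule step[OF c2 e3 f7 f15 f3])
      have e5: "x ^ 31 + x ^ 63 = x ^ 15" by (rule step[OF c2 e4 f15 f31 f7])
      have e6: "x ^ 63 + 1 = x ^ 31" by (rule step[OF c2 e5 f31 f63 f15])
      have "x = x ^ 31" using tri(2)[OF c2 e] tri(3)[OF c2 e6] by simp
      thus ?thesis using d by simp
    qed
  next
    assume "1 + x = x ^ 7 \<or> 1 + x ^ 3 = x ^ 7"
    thus "additive_subgroup {0, 1, x, x ^ 3, x ^ 7, x ^ 15, x ^ 31, x ^ 63}"
    proof
      assume e0: "1 + x = x ^ 7"
      have e1: "x + x ^ 3 = x ^ 15" by (rule step[OF c2 e0 f0 f1 f7])
      have e2: "x ^ 3 + x ^ 7 = x ^ 31" by (rule step[OF c2 e1 f1 f3 f15])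
      have e3: "x ^ 7 + x ^ 15 = x ^ 63" by (rule step[OF c2 e2 f3 f7 f31])
      have e4: "x ^ 15 + x ^ 31 = 1" by (rule step[OF c2 e3 f7 f15 f63])
      have e5: "x ^ 31 + x ^ 63 = x" by (rule step[OF c2 e4 f15 f31 f0])
      have e6: "x ^ 63 + 1 = x ^ 3" by (rule step[OF c2 e5 f31 f63 f1])
      show ?thesis unfolding additive_subgroup_def
        using tri[OF c2 e0] tri[OF c2 e1] tri[OF c2 e2] tri[OF c2 e3] tri[OF c2 e4]
          tri[OF c2 e5] tri[OF c2 e6]
        by (simp add: aa neg)
    next
      assume e0: "1 + x ^ 3 = x ^ 7"
      have e1: "x + x ^ 7 = x ^ 15" by (rule step[OF c2 e0 f0 f3 f7])
      have e2: "x ^ 3 + x ^ 15 = x ^ 31" by (rule step[OF c2 e1 f1 f7 f15])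
      have e3: "x ^ 7 + x ^ 31 = x ^ 63" by (rule step[OF c2 e2 f3 f15 f31])
      have e4: "x ^ 15 + x ^ 63 = 1" by (rule step[OF c2 e3 f7 f31 f63])
      have e5: "x ^ 31 + 1 = x" by (rule step[OF c2 e4 f15 f63 f0])
      have e6: "x ^ 63 + x = x ^ 3" by (rule step[OF c2 e5 f31 f0 f1])
      show ?thesis unfolding additive_subgroup_def
        using tri[OF c2 e0] tri[OF c2 e1] tri[OF c2 e2] tri[OF c2 e3] tri[OF c2 e4]
          tri[OF c2 e5] tri[OF c2 e6]
        by (simp add: aa neg)
    qed
  qed
qed

end
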